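(* In the five-machine configuration near a central mass (Fermi normal coordinates about a radial Schwarzschild geodesic with $\mu=GM/(c^2r^3)$, $r$ treated as constant; $B_1,B_2$ symmetric on the $x$-axis, $A_0,A_1,A_2$ equally spaced on a circle in the plane $x=0$; seven two-way channels between $B_j$ and $A_n$ and between $B_1,B_2$ with null phases and one-way transit of $2N$ cycles; the three channels between the $A_n$ with transit $3N$ cycles and common reception phase $\phi$), let $L\approx 2Np_\tau c$ denote the proper radar distance between $B_1$ and $B_2$. If the reception phase $\phi$ of the channels $\overrightarrow{A_nA_{n\pm1}}$ is to satisfy the logical-synchronization requirement $|\phi|<1/2$, then, to first order in curvature, $$p_\tau>\frac{27\,GM\,L^3}{32\,r^3c^3},$$ so that with an alphabet of $b$ bits per character the bit rate of every channel in the cluster is bounded by $b/p_\tau<\dfrac{32\,b\,r^3c^3}{27\,GM\,L^3}$.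
   Context: An open machine is modeled as a smooth future-pointing timelike worldline parametrized by its adjustable clock reading; readings are written $m.\phi$ with integer $m$ and phase $\phi\in(-1/2,1/2]$; a tick occurs at each integer reading and one character is transmitted per cycle. Signals propagate along null geodesics. A channel $\overrightarrow{AB}$ is a set of pairs (transmission $A$-reading, reception $B$-reading). In this configuration, to first order in curvature, the common phase satisfies $\phi=-27GMN^3p_\tau^2/(8r^3)$, where $p_\tau$ is the proper clock period of $B_1$. Logical synchronization demands that every reception phase satisfy $|\phi|<(1-\eta)/2$ for some $\eta>0$. *)

theory Defs
  imports Complex_Main
begin

text \<open>First-order (in curvature) common reception phase of the channels A_n -> A_(n+-1)
  in the five-machine cluster: phi = -27 G M N^3 p^2 / (8 r^3), with p the proper clock
  period of B_1 and 2N the one-way transit (in cycles) between B_j and A_n.\<close>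
definition cluster_phase :: "real \<Rightarrow> real \<Rightarrow> nat \<Rightarrow> real \<Rightarrow> real \<Rightarrow> real" where
  "cluster_phase G M N p r = - 27 * G * M * (real N)^3 * p^2 / (8 * r^3)"

definition radar_distance :: "nat \<Rightarrow> real \<Rightarrow> real \<Rightarrow> real" where
  "radar_distance N p c = 2 * real N * p * c"

end

theory Submission
  imports Defs
begin

theorem mainTheorem5:
  fixes G M r c p :: real and N b :: nat
  assumes "G > 0" and "M > 0" and "r > 0" and "c > 0" and "p > 0"
    and "N > 0" and "b > 0"
    and "\<bar>cluster_phase G M N p r\<bar> < 1/2"
  shows "p > 27 * G * M * (radar_distance N p c)^3 / (32 * r^3 * c^3)
       \<and> real b / p < 32 * real b * r^3 * c^3 / (27 * G * M * (radar_distance N p c)^3)"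
proof -
  define K where "K = 27 * G * M * (real N)^3 * p^2 / (8 * r^3)"
  have Kpos: "K > 0" using assms unfolding K_def by simp
  have ph: "cluster_phase G M N p r = - K" unfolding cluster_phase_def K_def by simp
  have Klt: "K < 1/2" using assms(8) ph Kpos by simp
  have eq: "27 * G * M * (radar_distance N p c)^3 / (32 * r^3 * c^3) = 2 * K * p"
    unfolding radar_distance_def K_def using assms
    by (simp add: field_simps power_mult_distrib power2_eq_square power3_eq_cube)
  have A: "2 * K * p < p" using Klt assms(5) by simp
  have Q: "0 < 27 * G * M * (radar_distance N p c)^3 / (32 * r^3 * c^3)"
    using eq Kpos assms(5) by simp
  have eq2: "32 * real b * r^3 * c^3 / (27 * G * M * (radar_distance N p c)^3)
      = real b / (27 * G * M * (radar_distance N p c)^3 / (32 * r^3 * c^3))"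
    by simp
  have B: "real b / p < real b / (27 * G * M * (radar_distance N p c)^3 / (32 * r^3 * c^3))"
    using A eq Q assms(7) by (intro divide_strict_left_mono) auto
  show ?thesis using A eq B eq2 by simp
qed

end
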